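(* Let $R$ be a ring (associative with identity), let $m,n\geq 1$ and $k\geq 2$ be integers. If the matrix rings $M_n(R)$ and $M_m(R)$ are both $k$-clean, then so is $M_{n+m}(R)$.
   Context: For a positive integer $k$, a ring $S$ is $k$-clean if every element of $S$ can be written as $e+u_1+\cdots+u_k$ with $e=e^2\in S$ and $u_1,\dots,u_k$ units of $S$. *)

theory Defs
  imports "HOL-Algebra.Ring" "Jordan_Normal_Form.Matrix"
begin

definition k_clean :: "('c, 'd) ring_scheme \<Rightarrow> nat \<Rightarrow> bool" where
  "k_clean S k \<longleftrightarrow>
     (\<forall>x \<in> carrier S. \<exists>e u. e \<in> carrier S \<and> e \<otimes>\<^bsub>S\<^esub> e = e \<and>
        (\<forall>i<k. u i \<in> Units S) \<and>
        x = e \<oplus>\<^bsub>S\<^esub> (\<Oplus>\<^bsub>S\<^esub> i\<in>{..<k}. u i))"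

end

theory Submission
  imports Defs
begin

lemma finsum_mat_index:
  fixes M :: "nat \<Rightarrow> 'a::ring_1 mat"
  assumes "finite I" "\<forall>i\<in>I. M i \<in> carrier_mat N N"
  shows "finsum (ring_mat TYPE('a) N ()) M I \<in> carrier_mat N N \<and>
     (\<forall>a b. a < N \<longrightarrow> b < N \<longrightarrow> finsum (ring_mat TYPE('a) N ()) M I $$ (a,b) = (\<Sum>i\<in>I. M i $$ (a,b)))"
proof -
  interpret semiring "ring_mat TYPE('a) N ()" by (rule semiring_mat)
  show ?thesis using assms
  proof (induction I rule: finite_induct)
    case empty
    then show ?case by (simp add: ring_mat_simps)
  next
    case (insert x F)
    have f: "M \<in> F \<rightarrow> carrier (ring_mat TYPE('a) N ())" "M x \<in> carrier (ring_mat TYPE('a) N ())"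
      using insert by (auto simp: ring_mat_simps)
    have IH: "finsum (ring_mat TYPE('a) N ()) M F \<in> carrier_mat N N \<and>
     (\<forall>a b. a < N \<longrightarrow> b < N \<longrightarrow> finsum (ring_mat TYPE('a) N ()) M F $$ (a,b) = (\<Sum>i\<in>F. M i $$ (a,b)))"
      using insert by auto
    show ?case
      unfolding finsum_insert[OF insert(1,2) f]
      using IH insert(1,2) f by (auto simp: ring_mat_simps)
  qed
qed

lemma unit_upper:
  fixes U V X :: "'a::ring_1 mat"
  assumes U: "U \<in> carrier_mat n n" "Ui \<in> carrier_mat n n" "U * Ui = 1\<^sub>m n" "Ui * U = 1\<^sub>m n"
    and V: "V \<in> carrier_mat m m" "Vi \<in> carrier_mat m m" "V * Vi = 1\<^sub>m m" "Vi * V = 1\<^sub>m m"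
    and X: "X \<in> carrier_mat n m"
  shows "four_block_mat U X (0\<^sub>m m n) V \<in> Units (ring_mat TYPE('a) (n+m) ())"
proof -
  define Y where "Y = - (Ui * X * Vi)"
  have UiX: "Ui * X \<in> carrier_mat n m" using U X by (metis mult_carrier_mat)
  have XVi: "X * Vi \<in> carrier_mat n m" using V X by (metis mult_carrier_mat)
  have c: "Ui * X * Vi \<in> carrier_mat n m" using UiX V by (metis mult_carrier_mat)
  have Y: "Y \<in> carrier_mat n m" unfolding Y_def using c by (metis uminus_carrier_iff_mat)
  have a1: "U * (Ui * X * Vi) = X * Vi"
  proof -
    have "U * (Ui * X * Vi) = U * (Ui * X) * Vi" using U(1) UiX V(2) assoc_mult_mat by metis
    also have "U * (Ui * X) = U * Ui * X" using U(1,2) X assoc_mult_mat by metis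
    also have "\<dots> = X" using U(3) X left_mult_one_mat by metis
    finally show ?thesis .
  qed
  have e1: "U * Y + X * Vi = 0\<^sub>m n m"
  proof -
    have "U * Y = - (U * (Ui * X * Vi))" unfolding Y_def
      by (rule uminus_mult_right_mat, insert U(1,2) c, simp)
    then have "U * Y = - (X * Vi)" using a1 by simp
    then show ?thesis using XVi uminus_l_inv_mat by metis
  qed
  have a2: "Ui * X * Vi * V = Ui * X"
  proof -
    have "Ui * X * Vi * V = Ui * X * (Vi * V)" using UiX V(1,2) assoc_mult_mat by metis
    also have "\<dots> = Ui * X" using V(4) UiX right_mult_one_mat by metis
    finally show ?thesis .
  qed
  have e2: "Ui * X + Y * V = 0\<^sub>m n m"
  proof -
    have "Y * V = - (Ui * X * Vi * V)" unfolding Y_def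
      by (rule uminus_mult_left_mat, insert V(1,2) c, simp)
    then have "Y * V = - (Ui * X)" using a2 by simp
    then show ?thesis using UiX minus_r_inv_mat
      by (metis add_uminus_minus_mat)
  qed
  let ?W = "four_block_mat Ui Y (0\<^sub>m m n) Vi"
  let ?M = "four_block_mat U X (0\<^sub>m m n) V"
  have z: "0\<^sub>m m n \<in> carrier_mat m n" by simp
  have p1: "?M * ?W = 1\<^sub>m (n+m)"
  proof -
    have "?M * ?W = four_block_mat (U * Ui + X * 0\<^sub>m m n) (U * Y + X * Vi)
       (0\<^sub>m m n * Ui + V * 0\<^sub>m m n) (0\<^sub>m m n * Y + V * Vi)"
      by (rule mult_four_block_mat[OF U(1) X z V(1) U(2) Y z V(2)])
    also have "\<dots> = four_block_mat (1\<^sub>m n) (0\<^sub>m n m) (0\<^sub>m m n) (1\<^sub>m m)"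
      using U V X Y e1 by (intro cong_four_block_mat, auto)
    finally show ?thesis by simp
  qed
  have p2: "?W * ?M = 1\<^sub>m (n+m)"
  proof -
    have "?W * ?M = four_block_mat (Ui * U + Y * 0\<^sub>m m n) (Ui * X + Y * V)
       (0\<^sub>m m n * U + Vi * 0\<^sub>m m n) (0\<^sub>m m n * X + Vi * V)"
      by (rule mult_four_block_mat[OF U(2) Y z V(2) U(1) X z V(1)])
    also have "\<dots> = four_block_mat (1\<^sub>m n) (0\<^sub>m n m) (0\<^sub>m m n) (1\<^sub>m m)"
      using U V X Y e2 by (intro cong_four_block_mat, auto)
    finally show ?thesis by simp
  qed
  have Mc: "?M \<in> carrier_mat (n+m) (n+m)" using U V by simp
  have Wc: "?W \<in> carrier_mat (n+m) (n+m)" using U V by simp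
  show ?thesis unfolding Units_def ring_mat_simps using p1 p2 Mc Wc by blast
qed

lemma unit_lower:
  fixes U V X :: "'a::ring_1 mat"
  assumes U: "U \<in> carrier_mat n n" "Ui \<in> carrier_mat n n" "U * Ui = 1\<^sub>m n" "Ui * U = 1\<^sub>m n"
    and V: "V \<in> carrier_mat m m" "Vi \<in> carrier_mat m m" "V * Vi = 1\<^sub>m m" "Vi * V = 1\<^sub>m m"
    and X: "X \<in> carrier_mat m n"
  shows "four_block_mat U (0\<^sub>m n m) X V \<in> Units (ring_mat TYPE('a) (n+m) ())"
proof -
  define Y where "Y = - (Vi * X * Ui)"
  have ViX: "Vi * X \<in> carrier_mat m n" using V X by (metis mult_carrier_mat)
  have XUi: "X * Ui \<in> carrier_mat m n" using U X by (metis mult_carrier_mat)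
  have c: "Vi * X * Ui \<in> carrier_mat m n" using ViX U by (metis mult_carrier_mat)
  have Y: "Y \<in> carrier_mat m n" unfolding Y_def using c by (metis uminus_carrier_iff_mat)
  have a1: "V * (Vi * X * Ui) = X * Ui"
  proof -
    have "V * (Vi * X * Ui) = V * (Vi * X) * Ui" using V(1) ViX U(2) assoc_mult_mat by metis
    also have "V * (Vi * X) = V * Vi * X" using V(1,2) X assoc_mult_mat by metis
    also have "\<dots> = X" using V(3) X left_mult_one_mat by metis
    finally show ?thesis .
  qed
  have e1: "X * Ui + V * Y = 0\<^sub>m m n"
  proof -
    have "V * Y = - (V * (Vi * X * Ui))" unfolding Y_def
      by (rule uminus_mult_right_mat, insert V(1,2) c, simp)
    then have "V * Y = - (X * Ui)" using a1 by simp
    then show ?thesis using XUi minus_r_inv_mat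
      by (metis add_uminus_minus_mat)
  qed
  have a2: "Vi * X * Ui * U = Vi * X"
  proof -
    have "Vi * X * Ui * U = Vi * X * (Ui * U)" using ViX U(1,2) assoc_mult_mat by metis
    also have "\<dots> = Vi * X" using U(4) ViX right_mult_one_mat by metis
    finally show ?thesis .
  qed
  have e2: "Y * U + Vi * X = 0\<^sub>m m n"
  proof -
    have "Y * U = - (Vi * X * Ui * U)" unfolding Y_def
      by (rule uminus_mult_left_mat, insert U(1,2) c, simp)
    then have "Y * U = - (Vi * X)" using a2 by simp
    then show ?thesis using ViX uminus_l_inv_mat by metis
  qed
  let ?W = "four_block_mat Ui (0\<^sub>m n m) Y Vi"
  let ?M = "four_block_mat U (0\<^sub>m n m) X V"
  have z: "0\<^sub>m n m \<in> carrier_mat n m" by simp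
  have p1: "?M * ?W = 1\<^sub>m (n+m)"
  proof -
    have "?M * ?W = four_block_mat (U * Ui + 0\<^sub>m n m * Y) (U * 0\<^sub>m n m + 0\<^sub>m n m * Vi)
       (X * Ui + V * Y) (X * 0\<^sub>m n m + V * Vi)"
      by (rule mult_four_block_mat[OF U(1) z X V(1) U(2) z Y V(2)])
    also have "\<dots> = four_block_mat (1\<^sub>m n) (0\<^sub>m n m) (0\<^sub>m m n) (1\<^sub>m m)"
      using U V X Y e1 by (intro cong_four_block_mat, auto)
    finally show ?thesis by simp
  qed
  have p2: "?W * ?M = 1\<^sub>m (n+m)"
  proof -
    have "?W * ?M = four_block_mat (Ui * U + 0\<^sub>m n m * X) (Ui * 0\<^sub>m n m + 0\<^sub>m n m * V)
       (Y * U + Vi * X) (Y * 0\<^sub>m n m + Vi * V)"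
      by (rule mult_four_block_mat[OF U(2) z Y V(2) U(1) z X V(1)])
    also have "\<dots> = four_block_mat (1\<^sub>m n) (0\<^sub>m n m) (0\<^sub>m m n) (1\<^sub>m m)"
      using U V X Y e2 by (intro cong_four_block_mat, auto)
    finally show ?thesis by simp
  qed
  have Mc: "?M \<in> carrier_mat (n+m) (n+m)" using U V by simp
  have Wc: "?W \<in> carrier_mat (n+m) (n+m)" using U V by simp
  show ?thesis unfolding Units_def ring_mat_simps using p1 p2 Mc Wc by blast
qed

lemma units_mat_inv:
  assumes "x \<in> Units (ring_mat TYPE('a::ring_1) N ())"
  shows "x \<in> carrier_mat N N \<and> (\<exists>y. y \<in> carrier_mat N N \<and> x * y = 1\<^sub>m N \<and> y * x = 1\<^sub>m N)"
  using assms unfolding Units_def ring_mat_simps by auto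

theorem lemma5:
  fixes n m k :: nat
  assumes "n \<ge> 1" and "m \<ge> 1" and "k \<ge> 2"
    and "k_clean (ring_mat TYPE('a :: ring_1) n ()) k"
    and "k_clean (ring_mat TYPE('a) m ()) k"
  shows "k_clean (ring_mat TYPE('a) (n + m) ()) k"
  unfolding k_clean_def
proof (intro ballI)
  fix A :: "'a mat"
  assume "A \<in> carrier (ring_mat TYPE('a) (n + m) ())"
  then have A: "A \<in> carrier_mat (n+m) (n+m)" by (simp add: ring_mat_simps)
  obtain A1 A2 A3 A4 where sb: "split_block A n n = (A1,A2,A3,A4)"
    by (cases "split_block A n n") auto
  have dA: "dim_row A = n + m" "dim_col A = n + m" using A by auto
  note blk = split_block[OF sb dA]
  obtain e1 u1 where e1: "e1 \<in> carrier_mat n n" "e1 * e1 = e1" "\<forall>i<k. u1 i \<in> Units (ring_mat TYPE('a) n ())"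
    "A1 = e1 + finsum (ring_mat TYPE('a) n ()) u1 {..<k}"
    using assms(4) blk(1) unfolding k_clean_def ring_mat_simps by blast
  obtain e2 u2 where e2: "e2 \<in> carrier_mat m m" "e2 * e2 = e2" "\<forall>i<k. u2 i \<in> Units (ring_mat TYPE('a) m ())"
    "A4 = e2 + finsum (ring_mat TYPE('a) m ()) u2 {..<k}"
    using assms(5) blk(4) unfolding k_clean_def ring_mat_simps by blast
  have "\<forall>i. \<exists>y. i < k \<longrightarrow> u1 i \<in> carrier_mat n n \<and> y \<in> carrier_mat n n \<and> u1 i * y = 1\<^sub>m n \<and> y * u1 i = 1\<^sub>m n"
    using e1(3) units_mat_inv by blast
  from choice[OF this] obtain v1 where v1: "\<And>i. i < k \<Longrightarrow> u1 i \<in> carrier_mat n n \<and> v1 i \<in> carrier_mat n n \<and> u1 i * v1 i = 1\<^sub>m n \<and> v1 i * u1 i = 1\<^sub>m n"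
    by blast
  have "\<forall>i. \<exists>y. i < k \<longrightarrow> u2 i \<in> carrier_mat m m \<and> y \<in> carrier_mat m m \<and> u2 i * y = 1\<^sub>m m \<and> y * u2 i = 1\<^sub>m m"
    using e2(3) units_mat_inv by blast
  from choice[OF this] obtain v2 where v2: "\<And>i. i < k \<Longrightarrow> u2 i \<in> carrier_mat m m \<and> v2 i \<in> carrier_mat m m \<and> u2 i * v2 i = 1\<^sub>m m \<and> v2 i * u2 i = 1\<^sub>m m"
    by blast
  define e where "e = four_block_mat e1 (0\<^sub>m n m) (0\<^sub>m m n) e2"
  define u where "u = (\<lambda>i. four_block_mat (u1 i) (if i = 0 then A2 else 0\<^sub>m n m)
      (if i = 1 then A3 else 0\<^sub>m m n) (u2 i))"
  have ec: "e \<in> carrier_mat (n+m) (n+m)" unfolding e_def using e1 e2 by simp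
  have ee: "e * e = e"
  proof -
    have "e * e = four_block_mat (e1 * e1 + 0\<^sub>m n m * 0\<^sub>m m n) (e1 * 0\<^sub>m n m + 0\<^sub>m n m * e2)
       (0\<^sub>m m n * e1 + e2 * 0\<^sub>m m n) (0\<^sub>m m n * 0\<^sub>m n m + e2 * e2)"
      unfolding e_def by (rule mult_four_block_mat, insert e1 e2, auto)
    also have "\<dots> = e" unfolding e_def using e1 e2 by (intro cong_four_block_mat, auto)
    finally show ?thesis .
  qed
  have uU: "u i \<in> Units (ring_mat TYPE('a) (n + m) ())" if i: "i < k" for i
  proof -
    have p1: "u1 i \<in> carrier_mat n n" "v1 i \<in> carrier_mat n n" "u1 i * v1 i = 1\<^sub>m n" "v1 i * u1 i = 1\<^sub>m n"
      using v1[OF i] by auto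
    have p2: "u2 i \<in> carrier_mat m m" "v2 i \<in> carrier_mat m m" "u2 i * v2 i = 1\<^sub>m m" "v2 i * u2 i = 1\<^sub>m m"
      using v2[OF i] by auto
    show ?thesis
    proof (cases "i = 1")
      case True
      then have ueq: "u i = four_block_mat (u1 i) (0\<^sub>m n m) A3 (u2 i)" unfolding u_def by simp
      show ?thesis unfolding ueq by (rule unit_lower[OF p1 p2 blk(3)])
    next
      case False
      have X: "(if i = 0 then A2 else 0\<^sub>m n m) \<in> carrier_mat n m" using blk by auto
      from False have ueq: "u i = four_block_mat (u1 i) (if i = 0 then A2 else 0\<^sub>m n m) (0\<^sub>m m n) (u2 i)" unfolding u_def by simp
      show ?thesis unfolding ueq by (rule unit_upper[OF p1 p2 X])
    qed
  qed
  have u1c: "\<forall>i\<in>{..<k}. u1 i \<in> carrier_mat n n" using v1 by blast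
  have u2c: "\<forall>i\<in>{..<k}. u2 i \<in> carrier_mat m m" using v2 by blast
  have uc: "\<forall>i\<in>{..<k}. u i \<in> carrier_mat (n+m) (n+m)"
  proof
    fix i assume "i \<in> {..<k}"
    then have "u1 i \<in> carrier_mat n n" "u2 i \<in> carrier_mat m m" using u1c u2c by auto
    then show "u i \<in> carrier_mat (n+m) (n+m)" unfolding u_def by (rule four_block_carrier_mat)
  qed
  note F = finsum_mat_index[OF _ uc, simplified]
  note F1 = finsum_mat_index[OF _ u1c, simplified]
  note F2 = finsum_mat_index[OF _ u2c, simplified]
  have Fc: "finsum (ring_mat TYPE('a) (n + m) ()) u {..<k} \<in> carrier_mat (n+m) (n+m)" using F by blast
  have Fe: "\<And>a b. a < n + m \<Longrightarrow> b < n + m \<Longrightarrow> finsum (ring_mat TYPE('a) (n + m) ()) u {..<k} $$ (a,b) = (\<Sum>i<k. u i $$ (a,b))"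
    using F by blast
  have Fd: "dim_row (finsum (ring_mat TYPE('a) (n + m) ()) u {..<k}) = n + m"
     "dim_col (finsum (ring_mat TYPE('a) (n + m) ()) u {..<k}) = n + m" using Fc by auto
  have ed: "dim_row e = n + m" "dim_col e = n + m" using ec by auto
  have "A = e + finsum (ring_mat TYPE('a) (n + m) ()) u {..<k}"
  proof (rule eq_matI)
    show "dim_row A = dim_row (e + finsum (ring_mat TYPE('a) (n + m) ()) u {..<k})"
      using Fd ed dA by simp
    show "dim_col A = dim_col (e + finsum (ring_mat TYPE('a) (n + m) ()) u {..<k})"
      using Fd ed dA by simp
    fix a b assume a: "a < dim_row (e + finsum (ring_mat TYPE('a) (n + m) ()) u {..<k})"
      and b: "b < dim_col (e + finsum (ring_mat TYPE('a) (n + m) ()) u {..<k})"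
    have a: "a < n + m" using a Fd ed by simp
    have b: "b < n + m" using b Fd ed by simp
    have ent: "u i $$ (a,b) = (if a < n then if b < n then u1 i $$ (a,b) else (if i = 0 then A2 $$ (a, b - n) else 0)
      else if b < n then (if i = 1 then A3 $$ (a - n, b) else 0) else u2 i $$ (a - n, b - n))"
      if i: "i < k" for i
    proof -
      have c1: "dim_row (u1 i) = n" "dim_col (u1 i) = n" using u1c i by auto
      have c2: "dim_row (u2 i) = m" "dim_col (u2 i) = m" using u2c i by auto
      show ?thesis unfolding u_def using index_mat_four_block(1)[of a "u1 i" "u2 i" b] c1 c2 a b by simp
    qed
    have S: "(\<Sum>i<k. u i $$ (a,b)) = (if a < n then if b < n then (\<Sum>i<k. u1 i $$ (a,b)) else A2 $$ (a, b - n)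
      else if b < n then A3 $$ (a - n, b) else (\<Sum>i<k. u2 i $$ (a - n, b - n)))"
    proof -
      have "(\<Sum>i<k. u i $$ (a,b)) = (\<Sum>i<k. (if a < n then if b < n then u1 i $$ (a,b) else (if i = 0 then A2 $$ (a, b - n) else 0)
      else if b < n then (if i = 1 then A3 $$ (a - n, b) else 0) else u2 i $$ (a - n, b - n)))"
        by (rule sum.cong[OF refl], simp add: ent)
      also have "\<dots> = (if a < n then if b < n then (\<Sum>i<k. u1 i $$ (a,b)) else A2 $$ (a, b - n)
      else if b < n then A3 $$ (a - n, b) else (\<Sum>i<k. u2 i $$ (a - n, b - n)))"
        using assms(3) by (simp add: sum.delta)
      finally show ?thesis .
    qed
    have rhs: "(e + finsum (ring_mat TYPE('a) (n + m) ()) u {..<k}) $$ (a,b) = e $$ (a,b) + (\<Sum>i<k. u i $$ (a,b))"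
      using Fe Fd ed a b by simp
    show "A $$ (a,b) = (e + finsum (ring_mat TYPE('a) (n + m) ()) u {..<k}) $$ (a,b)"
    proof -
      have dA1: "dim_row A1 = n" "dim_col A1 = n" using blk by auto
      have dA4: "dim_row A4 = m" "dim_col A4 = m" using blk by auto
      have LA: "A $$ (a,b) = (if a < n then if b < n then A1 $$ (a,b) else A2 $$ (a, b - n)
        else if b < n then A3 $$ (a - n, b) else A4 $$ (a - n, b - n))"
        using index_mat_four_block(1)[of a A1 A4 b A2 A3] blk(5) dA1 dA4 a b by simp
      have de: "dim_row e1 = n" "dim_col e1 = n" "dim_row e2 = m" "dim_col e2 = m" using e1 e2 by auto
      have LE: "e $$ (a,b) = (if a < n then if b < n then e1 $$ (a,b) else 0
        else if b < n then 0 else e2 $$ (a - n, b - n))"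
        unfolding e_def using index_mat_four_block(1)[of a e1 e2 b] de a b by simp
      have F1c: "finsum (ring_mat TYPE('a) n ()) u1 {..<k} \<in> carrier_mat n n" using F1 by blast
      have F2c: "finsum (ring_mat TYPE('a) m ()) u2 {..<k} \<in> carrier_mat m m" using F2 by blast
      have F1e: "\<And>a b. a < n \<Longrightarrow> b < n \<Longrightarrow> A1 $$ (a,b) = e1 $$ (a,b) + (\<Sum>i<k. u1 i $$ (a,b))"
        unfolding e1(4) using F1 F1c e1(1) by simp
      have F2e: "\<And>a b. a < m \<Longrightarrow> b < m \<Longrightarrow> A4 $$ (a,b) = e2 $$ (a,b) + (\<Sum>i<k. u2 i $$ (a,b))"
        unfolding e2(4) using F2 F2c e2(1) by simp
      show ?thesis unfolding rhs S LA LE using a b F1e F2e by auto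
    qed
  qed
  note Aeq = this
  show "\<exists>e u. e \<in> carrier (ring_mat TYPE('a) (n + m) ()) \<and>
              e \<otimes>\<^bsub>ring_mat TYPE('a) (n + m) ()\<^esub> e = e \<and>
              (\<forall>i<k. u i \<in> Units (ring_mat TYPE('a) (n + m) ())) \<and>
              A = e \<oplus>\<^bsub>ring_mat TYPE('a) (n + m) ()\<^esub> (\<Oplus>\<^bsub>ring_mat TYPE('a) (n + m) ()\<^esub>i\<in>{..<k}. u i)"
  proof (intro exI conjI)
    show "e \<in> carrier (ring_mat TYPE('a) (n + m) ())" using ec by (simp add: ring_mat_simps)
    show "e \<otimes>\<^bsub>ring_mat TYPE('a) (n + m) ()\<^esub> e = e" using ee by (simp add: ring_mat_simps)
    show "\<forall>i<k. u i \<in> Units (ring_mat TYPE('a) (n + m) ())" using uU by blast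
  qed (simp add: ring_mat_simps Aeq)
qed

end
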